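(* Let $\Gamma$ be a set of clauses with designated blocking variables. Any clause $C\lor\ell$ that is cost-BC w.r.t. $\Gamma$ and $\ell$ is also cost-LPR w.r.t. $\Gamma$.
   Context: Substitutions map variables to $0$, $1$ or literals ($\sigma(\lnot x)=\lnot\sigma(x)$); $(\sigma\circ\tau)(x)=\sigma(\tau(x))$; a partial assignment has $\sigma(x)\in\{0,1,x\}$, domain $\sigma^{-1}(\{0,1\})$; total means all variables assigned. $C{\upharpoonright}_\sigma$: apply $\sigma$ to the literals and simplify; $\Gamma{\upharpoonright}_\sigma$ is the multiset of $C{\upharpoonright}_\sigma\ne1$, $C\in\Gamma$. $\lnot C$ is the partial assignment falsifying all literals of $C$. $\Gamma\vdash_1 C$ means unit propagation on $\Gamma{\upharpoonright}_{\lnot C}$ derives the empty clause; $\Gamma\vdash_1\Delta$ means this for all $D\in\Delta$. $\mathrm{cost}(\alpha)=\sum_i\alpha(b_i)$ over blocking variables $b_i$. $C\lor\ell$ is cost-BC w.r.t. $\Gamma$ and $\ell$ if for every $D\lor\lnot\ell\in\Gamma$, $C\lor D$ is a tautology, and $\ell$ is not a blocking variable with positive polarity. A clause $E$ is cost-LPR w.r.t. $\Gamma$ if there is a partial assignment $\sigma$ with the same domain as $\lnot E$, differing from $\lnot E$ on exactly one variable, such that (1) $\Gamma{\upharpoonright}_{\lnot E}\vdash_1(\Gamma\cup\{E\}){\upharpoonright}_\sigma$ and (2) $\mathrm{cost}(\tau\circ\sigma)\le\mathrm{cost}(\tau)$ for all total $\tau\supseteq\lnot E$. *)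

theory Defs
  imports Main
begin

datatype 'v lit = Pos 'v | Neg 'v

fun var :: "'v lit \<Rightarrow> 'v" where
  "var (Pos x) = x" | "var (Neg x) = x"

fun neg_lit :: "'v lit \<Rightarrow> 'v lit" where
  "neg_lit (Pos x) = Neg x" | "neg_lit (Neg x) = Pos x"

type_synonym 'v clause = "'v lit set"
type_synonym 'v formula = "'v clause set"

text \<open>Partial assignment: None means unassigned (sigma(x) = x), Some b means sigma(x) = b.\<close>
type_synonym 'v assignment = "'v \<Rightarrow> bool option"

definition dom_asg :: "'v assignment \<Rightarrow> 'v set" where
  "dom_asg \<sigma> = {x. \<sigma> x \<noteq> None}"

definition total :: "'v assignment \<Rightarrow> bool" where
  "total \<sigma> \<longleftrightarrow> (\<forall>x. \<sigma> x \<noteq> None)"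

fun lit_val :: "'v assignment \<Rightarrow> 'v lit \<Rightarrow> bool option" where
  "lit_val \<sigma> (Pos x) = \<sigma> x"
| "lit_val \<sigma> (Neg x) = map_option Not (\<sigma> x)"

definition tautology :: "'v clause \<Rightarrow> bool" where
  "tautology C \<longleftrightarrow> (\<exists>l\<in>C. neg_lit l \<in> C)"

definition wf_clause :: "'v clause \<Rightarrow> bool" where
  "wf_clause C \<longleftrightarrow> finite C \<and> \<not> tautology C"

definition satisfies :: "'v assignment \<Rightarrow> 'v clause \<Rightarrow> bool" where
  "satisfies \<sigma> C \<longleftrightarrow> (\<exists>l\<in>C. lit_val \<sigma> l = Some True)"

text \<open>C restricted by sigma, in the case it is not satisfied: remove falsified literals.\<close>
definition restrict_clause :: "'v assignment \<Rightarrow> 'v clause \<Rightarrow> 'v clause" where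
  "restrict_clause \<sigma> C = {l\<in>C. lit_val \<sigma> l = None}"

definition restrict :: "'v assignment \<Rightarrow> 'v formula \<Rightarrow> 'v formula" where
  "restrict \<sigma> \<Gamma> = restrict_clause \<sigma> ` {C\<in>\<Gamma>. \<not> satisfies \<sigma> C}"

definition neg_clause :: "'v clause \<Rightarrow> 'v assignment" where
  "neg_clause C x = (if Pos x \<in> C then Some False else if Neg x \<in> C then Some True else None)"

definition lit_asg :: "'v lit \<Rightarrow> 'v assignment" where
  "lit_asg l = neg_clause {neg_lit l}"

inductive up_refutes :: "'v formula \<Rightarrow> bool" where
  empty: "{} \<in> F \<Longrightarrow> up_refutes F"
| unit: "{l} \<in> F \<Longrightarrow> up_refutes (restrict (lit_asg l) F) \<Longrightarrow> up_refutes F"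

definition up_implies :: "'v formula \<Rightarrow> 'v clause \<Rightarrow> bool" where
  "up_implies \<Gamma> C \<longleftrightarrow> up_refutes (restrict (neg_clause C) \<Gamma>)"

definition up_implies_all :: "'v formula \<Rightarrow> 'v formula \<Rightarrow> bool" where
  "up_implies_all \<Gamma> \<Delta> \<longleftrightarrow> (\<forall>D\<in>\<Delta>. up_implies \<Gamma> D)"

text \<open>Composition tau o sigma for a partial assignment sigma.\<close>
definition compose :: "'v assignment \<Rightarrow> 'v assignment \<Rightarrow> 'v assignment" where
  "compose \<tau> \<sigma> x = (case \<sigma> x of None \<Rightarrow> \<tau> x | Some b \<Rightarrow> Some b)"

definition extends :: "'v assignment \<Rightarrow> 'v assignment \<Rightarrow> bool" where
  "extends \<tau> \<sigma> \<longleftrightarrow> (\<forall>x\<in>dom_asg \<sigma>. \<tau> x = \<sigma> x)"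

definition cost :: "'v set \<Rightarrow> 'v assignment \<Rightarrow> nat" where
  "cost B \<alpha> = (\<Sum>b\<in>B. if \<alpha> b = Some True then 1 else 0)"

text \<open>E = C \<or> l with l \<in> E and C = E - {l}.\<close>
definition cost_BC :: "'v set \<Rightarrow> 'v formula \<Rightarrow> 'v clause \<Rightarrow> 'v lit \<Rightarrow> bool" where
  "cost_BC B \<Gamma> E l \<longleftrightarrow> l \<in> E \<and>
     (\<forall>F\<in>\<Gamma>. neg_lit l \<in> F \<longrightarrow> tautology ((E - {l}) \<union> (F - {neg_lit l}))) \<and>
     (\<forall>b\<in>B. l \<noteq> Pos b)"

definition cost_LPR :: "'v set \<Rightarrow> 'v formula \<Rightarrow> 'v clause \<Rightarrow> bool" where
  "cost_LPR B \<Gamma> E \<longleftrightarrow> (\<exists>\<sigma>.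
     dom_asg \<sigma> = dom_asg (neg_clause E) \<and>
     card {x. \<sigma> x \<noteq> neg_clause E x} = 1 \<and>
     up_implies_all (restrict (neg_clause E) \<Gamma>) (restrict \<sigma> (\<Gamma> \<union> {E})) \<and>
     (\<forall>\<tau>. total \<tau> \<longrightarrow> extends \<tau> (neg_clause E) \<longrightarrow> cost B (compose \<tau> \<sigma>) \<le> cost B \<tau>))"

end

theory Submission
  imports Defs
begin

lemma lit_val_neg: "lit_val s (neg_lit k) = map_option Not (lit_val s k)"
  by (cases k; cases "s (var k)") auto

lemma var_eq_cases: "var k = var l \<Longrightarrow> k = l \<or> k = neg_lit l"
  by (cases k; cases l) auto

lemma nc_false: "\<not> tautology E \<Longrightarrow> k \<in> E \<Longrightarrow> lit_val (neg_clause E) k = Some False"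
proof (cases k)
  case (Pos x)
  assume "k \<in> E" then show ?thesis using Pos by (simp add: neg_clause_def)
next
  case (Neg x)
  assume a: "\<not> tautology E" "k \<in> E"
  have "Pos x \<notin> E" using a Neg unfolding tautology_def by force
  then show ?thesis using a Neg by (simp add: neg_clause_def)
qed

lemma refute_self: "\<not> tautology D \<Longrightarrow> D \<in> G \<Longrightarrow> up_refutes (restrict (neg_clause D) G)"
proof -
  assume a: "\<not> tautology D" "D \<in> G"
  have ns: "\<not> satisfies (neg_clause D) D" using nc_false[OF a(1)] unfolding satisfies_def by auto
  have "restrict_clause (neg_clause D) D = {}" using nc_false[OF a(1)] unfolding restrict_clause_def by auto
  hence "{} \<in> restrict (neg_clause D) G" unfolding restrict_def using a(2) ns by force
  thus ?thesis by (rule up_refutes.empty)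
qed

theorem mainTheorem10:
  fixes B :: "'v set" and \<Gamma> :: "'v formula" and E :: "'v clause" and l :: "'v lit"
  assumes "finite B"
    and "\<forall>F\<in>\<Gamma>. wf_clause F"
    and "wf_clause E"
    and "cost_BC B \<Gamma> E l"
  shows "cost_LPR B \<Gamma> E"
proof -
  define v where "v = (case l of Pos _ \<Rightarrow> True | Neg _ \<Rightarrow> False)"
  define \<sigma> where "\<sigma> = (neg_clause E)(var l := Some v)"
  have lE: "l \<in> E" using assms(4) unfolding cost_BC_def by auto
  have ntE: "\<not> tautology E" using assms(3) unfolding wf_clause_def by auto
  have bc: "\<forall>F\<in>\<Gamma>. neg_lit l \<in> F \<longrightarrow> tautology ((E - {l}) \<union> (F - {neg_lit l}))"
    using assms(4) unfolding cost_BC_def by auto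
  have nB: "\<forall>b\<in>B. l \<noteq> Pos b" using assms(4) unfolding cost_BC_def by auto
  have nlE: "neg_lit l \<notin> E" using ntE lE unfolding tautology_def by auto
  have ncl: "neg_clause E (var l) \<noteq> Some v"
  proof (cases l)
    case (Pos x) then show ?thesis using lE by (simp add: neg_clause_def v_def)
  next
    case (Neg x) then show ?thesis using lE nlE by (simp add: neg_clause_def v_def)
  qed
  have nclS: "neg_clause E (var l) \<noteq> None"
    by (cases l) (use lE in \<open>auto simp: neg_clause_def\<close>)
  have sl: "lit_val \<sigma> l = Some True" by (cases l) (auto simp: \<sigma>_def v_def)
  have sk: "lit_val \<sigma> k = Some False" if "k \<in> E" "k \<noteq> l" for k
  proof -
    have "var k \<noteq> var l" using var_eq_cases[of k l] that nlE by auto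
    hence "lit_val \<sigma> k = lit_val (neg_clause E) k" by (cases k) (auto simp: \<sigma>_def)
    thus ?thesis using nc_false[OF ntE that(1)] by simp
  qed
  have same: "lit_val \<sigma> k = lit_val (neg_clause E) k" if "k \<in> F" "l \<notin> F" "neg_lit l \<notin> F" for k F
  proof -
    have "var k \<noteq> var l" using var_eq_cases[of k l] that by auto
    thus ?thesis by (cases k) (auto simp: \<sigma>_def)
  qed
  have dom: "dom_asg \<sigma> = dom_asg (neg_clause E)"
    using nclS unfolding dom_asg_def \<sigma>_def by auto
  have card: "card {x. \<sigma> x \<noteq> neg_clause E x} = 1"
  proof -
    have "{x. \<sigma> x \<noteq> neg_clause E x} = {var l}" using ncl unfolding \<sigma>_def by auto
    thus ?thesis by simp
  qed
  have up: "up_implies_all (restrict (neg_clause E) \<Gamma>) (restrict \<sigma> (\<Gamma> \<union> {E}))"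
    unfolding up_implies_all_def up_implies_def
  proof
    fix D assume "D \<in> restrict \<sigma> (\<Gamma> \<union> {E})"
    then obtain F where F: "F \<in> \<Gamma> \<union> {E}" "\<not> satisfies \<sigma> F" "D = restrict_clause \<sigma> F"
      unfolding restrict_def by auto
    have "F \<noteq> E" using F(2) lE sl unfolding satisfies_def by auto
    hence FG: "F \<in> \<Gamma>" using F(1) by auto
    have ntF: "\<not> tautology F" using assms(2) FG unfolding wf_clause_def by auto
    have lF: "l \<notin> F" using F(2) sl unfolding satisfies_def by auto
    have nlF: "neg_lit l \<notin> F"
    proof
      assume "neg_lit l \<in> F"
      hence "tautology ((E - {l}) \<union> (F - {neg_lit l}))" using bc FG by auto
      then obtain k where k: "k \<in> (E - {l}) \<union> (F - {neg_lit l})" "neg_lit k \<in> (E - {l}) \<union> (F - {neg_lit l})"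
        unfolding tautology_def by auto
      show False
      proof (cases "k \<in> E - {l}")
        case True
        hence "neg_lit k \<notin> E" using ntE unfolding tautology_def by auto
        hence "neg_lit k \<in> F" using k by auto
        moreover have "lit_val \<sigma> (neg_lit k) = Some True" using sk True by (simp add: lit_val_neg)
        ultimately show False using F(2) unfolding satisfies_def by auto
      next
        case False
        hence kF: "k \<in> F" using k by auto
        have nk: "neg_lit k \<notin> F" using kF ntF unfolding tautology_def by auto
        hence "neg_lit k \<in> E - {l}" using k by auto
        hence "lit_val \<sigma> (neg_lit k) = Some False" using sk by auto
        hence "lit_val \<sigma> k = Some True" by (cases "lit_val \<sigma> k") (auto simp: lit_val_neg)
        thus False using kF F(2) unfolding satisfies_def by auto
      qed
    qed
    have D: "D = restrict_clause (neg_clause E) F"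
      using F(3) same[OF _ lF nlF] unfolding restrict_clause_def by auto
    have "\<not> satisfies (neg_clause E) F"
      using F(2) same[OF _ lF nlF] unfolding satisfies_def by auto
    hence DG: "D \<in> restrict (neg_clause E) \<Gamma>" unfolding restrict_def using D FG by auto
    have "\<not> tautology D" using ntF D unfolding tautology_def restrict_clause_def by auto
    thus "up_refutes (restrict (neg_clause D) (restrict (neg_clause E) \<Gamma>))"
      using refute_self DG by blast
  qed
  have cst: "cost B (compose \<tau> \<sigma>) \<le> cost B \<tau>" if "total \<tau>" "extends \<tau> (neg_clause E)" for \<tau>
    unfolding cost_def
  proof (rule sum_mono)
    fix b assume bB: "b \<in> B"
    show "(if compose \<tau> \<sigma> b = Some True then 1 else 0) \<le> (if \<tau> b = Some True then 1 else (0::nat))"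
    proof (cases "b = var l")
      case True
      have "l = Neg b" using nB bB True by (cases l) auto
      hence "v = False" by (simp add: v_def)
      hence "compose \<tau> \<sigma> b = Some False" using True by (simp add: compose_def \<sigma>_def)
      thus ?thesis by simp
    next
      case False
      have "compose \<tau> \<sigma> b = \<tau> b"
      proof (cases "neg_clause E b")
        case None thus ?thesis using False by (simp add: compose_def \<sigma>_def)
      next
        case (Some c)
        hence "\<tau> b = Some c" using that(2) unfolding extends_def dom_asg_def by auto
        thus ?thesis using Some False by (simp add: compose_def \<sigma>_def)
      qed
      thus ?thesis by simp
    qed
  qed
  show ?thesis unfolding cost_LPR_def using dom card up cst by blast
qed

end
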